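(* Assume $F$ is $K$-smooth with $\ell\in\mathrm{int}(K)$ and strongly $K$-convex with $\mu\in\mathrm{int}(K)$. Let $e\in\mathrm{int}(K)$ and let $\{x^k\}$ be generated from $x^0$ by $$x^{k+1}:=\arg\min_{x\in\mathbb{R}^n}\max_{c^*\in C_e}\big\langle c^*,JF(x^k)(x-x^k)+\tfrac12\|x-x^k\|^2\ell\big\rangle,$$ assumed not to terminate ($x^{k+1}\ne x^k$ for all $k$). Then: (i) $\{x^k\}$ converges to an efficient solution $x^*$ of $\min_K F(x)$; (ii) $\|x^{k+1}-x^*\|\le\sqrt{1-1/\kappa_{F,\preceq_K}}\,\|x^k-x^*\|$ for all $k\ge0$, where $\kappa_{F,\preceq_K}:=\max_{c^*\in C_e}\frac{\langle c^*,\ell\rangle}{\langle c^*,\mu\rangle}$.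
   Context: $K\subset\mathbb{R}^m$ closed convex pointed cone with nonempty interior; $y\preceq_K y'$ iff $y'-y\in K$. $K^*=\{c:\langle c,y\rangle\ge0\ \forall y\in K\}$; for $e\in\mathrm{int}(K)$, $C_e:=\{c^*\in K^*:\langle c^*,e\rangle=1\}$. $F:\mathbb{R}^n\to\mathbb{R}^m$ differentiable with Jacobian $JF$. Strongly $K$-convex with $\mu\in K$: $JF(x)(y-x)+\tfrac12\|y-x\|^2\mu\preceq_K F(y)-F(x)$ $\forall x,y$. $K$-smooth with $\ell\in K$: $F(y)-F(x)\preceq_K JF(x)(y-x)+\tfrac12\|y-x\|^2\ell$ $\forall x,y$. The quantity $\kappa_{F,\preceq_K}$ equals $\max_{c^*\in K^*\setminus\{0\}}\langle c^*,\ell\rangle/\langle c^*,\mu\rangle$ and does not depend on $e$. $x^*$ is efficient if there is no $x$ with $F(x)\preceq_K F(x^* )$ and $F(x)\neq F(x^* )$. *)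

theory Defs
  imports "HOL-Analysis.Analysis"
begin

definition cone_le :: "'a::real_vector set \<Rightarrow> 'a \<Rightarrow> 'a \<Rightarrow> bool" where
  "cone_le K y y' \<longleftrightarrow> y' - y \<in> K"

definition dual_cone :: "'a::real_inner set \<Rightarrow> 'a set" where
  "dual_cone K = {c. \<forall>y\<in>K. 0 \<le> inner c y}"

definition C_set :: "'a::real_inner set \<Rightarrow> 'a \<Rightarrow> 'a set" where
  "C_set K e = {c \<in> dual_cone K. inner c e = 1}"

definition proper_cone :: "'a::real_normed_vector set \<Rightarrow> bool" where
  "proper_cone K \<longleftrightarrow> closed K \<and> convex K \<and> cone K \<and> K \<inter> uminus ` K \<subseteq> {0}
     \<and> interior K \<noteq> {}"

definition strongly_K_convex ::
  "'b::real_normed_vector set \<Rightarrow> ('a::real_normed_vector \<Rightarrow> 'b) \<Rightarrow> ('a \<Rightarrow> 'a \<Rightarrow> 'b) \<Rightarrow> 'b \<Rightarrow> bool" where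
  "strongly_K_convex K F JF \<mu> \<longleftrightarrow>
     (\<forall>x y. cone_le K (JF x (y - x) + ((1/2) * (norm (y - x))\<^sup>2) *\<^sub>R \<mu>) (F y - F x))"

definition K_smooth ::
  "'b::real_normed_vector set \<Rightarrow> ('a::real_normed_vector \<Rightarrow> 'b) \<Rightarrow> ('a \<Rightarrow> 'a \<Rightarrow> 'b) \<Rightarrow> 'b \<Rightarrow> bool" where
  "K_smooth K F JF l \<longleftrightarrow>
     (\<forall>x y. cone_le K (F y - F x) (JF x (y - x) + ((1/2) * (norm (y - x))\<^sup>2) *\<^sub>R l))"

definition efficient :: "'b::real_vector set \<Rightarrow> ('a \<Rightarrow> 'b) \<Rightarrow> 'a \<Rightarrow> bool" where
  "efficient K F xs \<longleftrightarrow> \<not> (\<exists>x. cone_le K (F x) (F xs) \<and> F x \<noteq> F xs)"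

definition subproblem_obj ::
  "'b::real_inner set \<Rightarrow> 'b \<Rightarrow> ('a::real_normed_vector \<Rightarrow> 'a \<Rightarrow> 'b) \<Rightarrow> 'b \<Rightarrow> 'a \<Rightarrow> 'a \<Rightarrow> real" where
  "subproblem_obj K e JF l xk x =
     (SUP c\<in>C_set K e. inner c (JF xk (x - xk) + ((1/2) * (norm (x - xk))\<^sup>2) *\<^sub>R l))"

definition kappa :: "'b::real_inner set \<Rightarrow> 'b \<Rightarrow> 'b \<Rightarrow> 'b \<Rightarrow> real" where
  "kappa K e l \<mu> = (SUP c\<in>C_set K e. inner c l / inner c \<mu>)"

end

theory Submission
  imports Defs
begin

lemma interior_dual_bound:
  fixes K :: "'a::real_inner set"
  assumes "v \<in> interior K"
  shows "\<exists>s>0. \<forall>c\<in>dual_cone K. s * norm c \<le> inner c v"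
proof -
  obtain r where r: "r > 0" "ball v r \<subseteq> K" using assms mem_interior by blast
  have "(r/2) * norm c \<le> inner c v" if c: "c \<in> dual_cone K" for c
  proof (cases "c = 0")
    case True then show ?thesis by simp
  next
    case False
    define y where "y = v - ((r/2) / norm c) *\<^sub>R c"
    have "dist v y = r/2" using False r by (simp add: y_def dist_norm)
    then have "y \<in> K" using r by auto
    then have "0 \<le> inner c y" using c by (auto simp: dual_cone_def)
    also have "inner c y = inner c v - ((r/2) / norm c) * (norm c)^2"
      by (simp add: y_def inner_diff_right power2_norm_eq_inner)
    also have "\<dots> = inner c v - (r/2) * norm c" using False
      by (simp add: power2_eq_square)
    finally show ?thesis by simp
  qed
  then show ?thesis using r by (intro exI[of _ "r/2"]) auto
qed

lemma dual_sep:
  fixes K :: "'a::euclidean_space set"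
  assumes "convex K" "closed K" "cone K" "0 \<in> K" "v \<notin> K"
  shows "\<exists>a\<in>dual_cone K. inner a v < 0"
proof -
  obtain a b where ab: "inner a v < b" "\<forall>x\<in>K. inner a x > b"
    using separating_hyperplane_closed_point[OF assms(1,2,5)] by blast
  have b: "b < 0" using ab(2) assms(4) by force
  have "0 \<le> inner a x" if x: "x \<in> K" for x
  proof (rule ccontr)
    assume "\<not> 0 \<le> inner a x"
    then have neg: "inner a x < 0" by simp
    define t where "t = b / inner a x"
    have t: "t \<ge> 0" using b neg by (simp add: t_def divide_nonpos_neg)
    have "t *\<^sub>R x \<in> K" using assms(3) x t by (simp add: cone_def)
    then have "inner a (t *\<^sub>R x) > b" using ab(2) by blast
    moreover have "inner a (t *\<^sub>R x) = b" using neg by (simp add: t_def)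
    ultimately show False by simp
  qed
  then have "a \<in> dual_cone K" by (simp add: dual_cone_def)
  then show ?thesis using ab b by (intro bexI[of _ a]) auto
qed

lemma proper_cone_0: "proper_cone K \<Longrightarrow> 0 \<in> K"
  unfolding proper_cone_def cone_def
  by (metis all_not_in_conv interior_subset scale_zero_left subset_empty order_refl)

lemma C_nonempty:
  fixes K :: "'a::euclidean_space set"
  assumes K: "proper_cone K" and e: "e \<in> interior K"
  shows "C_set K e \<noteq> {}"
proof -
  have K0: "0 \<in> K" using proper_cone_0[OF K] .
  have cl: "convex K" "closed K" "cone K" "K \<inter> uminus ` K \<subseteq> {0}"
    using K by (auto simp: proper_cone_def)
  have "- e \<notin> K"
  proof
    assume me: "- e \<in> K"
    have "e \<in> K" using e interior_subset by blast
    then have "e \<in> K \<inter> uminus ` K" using me by (auto intro: image_eqI[of _ _ "-e"])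
    then have e0: "e = 0" using cl(4) by auto
    obtain r where r: "r > 0" "ball 0 r \<subseteq> K" using e e0 mem_interior by blast
    obtain i :: 'a where i: "i \<in> Basis" using nonempty_Basis by blast
    define w where "w = (r/2) *\<^sub>R i"
    have nw: "norm w = r/2" using r i by (simp add: w_def)
    have "w \<in> K" "- w \<in> K" using r nw by (auto simp: dist_norm)
    then have "w \<in> K \<inter> uminus ` K" by (auto intro: image_eqI[of _ _ "-w"])
    then have "w = 0" using cl(4) by auto
    then show False using nw r by simp
  qed
  then obtain a where a: "a \<in> dual_cone K" "inner a (-e) < 0"
    using dual_sep[OF cl(1-3) K0] by blast
  have pos: "inner a e > 0" using a(2) by simp
  have "inverse (inner a e) *\<^sub>R a \<in> C_set K e"
    using a(1) pos by (auto simp: C_set_def dual_cone_def)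
  then show ?thesis by blast
qed

lemma quad_interp:
  fixes J :: "'a::real_inner \<Rightarrow> 'b::real_inner"
  assumes "linear J"
  shows "inner c (J ((1-t) *\<^sub>R u + t *\<^sub>R v) + ((1/2) * (norm ((1-t) *\<^sub>R u + t *\<^sub>R v))\<^sup>2) *\<^sub>R l)
    = (1-t) * inner c (J u + ((1/2) * (norm u)\<^sup>2) *\<^sub>R l) + t * inner c (J v + ((1/2) * (norm v)\<^sup>2) *\<^sub>R l)
      - (1/2) * inner c l * (t * (1-t) * (norm (v - u))\<^sup>2)"
proof -
  have n: "(norm ((1-t) *\<^sub>R u + t *\<^sub>R v))\<^sup>2 = (1-t) * (norm u)\<^sup>2 + t * (norm v)\<^sup>2 - t*(1-t)*(norm (v-u))\<^sup>2"
    by (simp add: power2_norm_eq_inner inner_add_left inner_add_right inner_diff_left inner_diff_right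
        inner_commute algebra_simps)
  have j: "J ((1-t) *\<^sub>R u + t *\<^sub>R v) = (1-t) *\<^sub>R J u + t *\<^sub>R J v"
    using assms by (simp add: linear_add linear_scale)
  show ?thesis unfolding n j
    by (simp add: inner_add_right algebra_simps) (simp add: field_simps)
qed


theorem lemma4p2:
  fixes K :: "(real^'m) set"
    and F :: "real^'n \<Rightarrow> real^'m"
    and JF :: "real^'n \<Rightarrow> real^'n \<Rightarrow> real^'m"
    and l \<mu> e :: "real^'m"
    and x :: "nat \<Rightarrow> real^'n"
  assumes K: "proper_cone K"
    and deriv: "\<And>z. (F has_derivative JF z) (at z)"
    and smooth: "K_smooth K F JF l" and l_int: "l \<in> interior K"
    and sconv: "strongly_K_convex K F JF \<mu>" and mu_int: "\<mu> \<in> interior K"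
    and e_int: "e \<in> interior K"
    and step: "\<And>k. is_arg_min (subproblem_obj K e JF l (x k)) (\<lambda>_. True) (x (Suc k))"
    and nonterm: "\<And>k. x (Suc k) \<noteq> x k"
  shows "\<exists>xs. efficient K F xs \<and> x \<longlonglongrightarrow> xs \<and>
           (\<forall>k. norm (x (Suc k) - xs) \<le> sqrt (1 - 1 / kappa K e l \<mu>) * norm (x k - xs))"
proof -
  define C where "C = C_set K e"
  have Cne: "C \<noteq> {}" unfolding C_def by (rule C_nonempty[OF K e_int])
  have CK: "c \<in> dual_cone K" if "c \<in> C" for c using that by (simp add: C_def C_set_def)
  have Ce: "inner c e = 1" if "c \<in> C" for c using that by (simp add: C_def C_set_def)
  have le: "inner c a \<le> inner c b" if "cone_le K a b" "c \<in> C" for a b c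
  proof -
    have "0 \<le> inner c (b - a)" using that CK[OF that(2)] by (auto simp: cone_le_def dual_cone_def)
    then show ?thesis by (simp add: inner_diff_right)
  qed
  obtain se where se: "se > 0" "\<forall>c\<in>dual_cone K. se * norm c \<le> inner c e"
    using interior_dual_bound[OF e_int] by blast
  obtain sl where sl: "sl > 0" "\<forall>c\<in>dual_cone K. sl * norm c \<le> inner c l"
    using interior_dual_bound[OF l_int] by blast
  obtain sm where sm: "sm > 0" "\<forall>c\<in>dual_cone K. sm * norm c \<le> inner c \<mu>"
    using interior_dual_bound[OF mu_int] by blast
  have cnorm: "norm c \<le> 1 / se" if "c \<in> C" for c
  proof -
    have "se * norm c \<le> 1" using se(2) CK[OF that] Ce[OF that] by force
    then show ?thesis using se(1) by (simp add: field_simps)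
  qed
  have cne0: "c \<noteq> 0" if "c \<in> C" for c using Ce[OF that] by auto
  obtain c0 where c0: "c0 \<in> C" using Cne by blast
  have ene: "norm e > 0" using Ce[OF c0] by auto
  define lmin where "lmin = sl / norm e"
  have lmin: "lmin > 0" using sl ene by (simp add: lmin_def)
  have lc: "inner c l \<ge> lmin" if c: "c \<in> C" for c
  proof -
    have "1 \<le> norm c * norm e" using Ce[OF c] norm_cauchy_schwarz[of c e] by simp
    then have "1 / norm e \<le> norm c" using ene by (simp add: field_simps)
    then have "sl * (1 / norm e) \<le> sl * norm c" using sl by (intro mult_left_mono) auto
    also have "\<dots> \<le> inner c l" using sl CK[OF c] by auto
    finally show ?thesis by (simp add: lmin_def)
  qed
  have mc: "inner c \<mu> > 0" if c: "c \<in> C" for c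
  proof -
    have "0 < sm * norm c" using sm cne0[OF c] by simp
    also have "\<dots> \<le> inner c \<mu>" using sm CK[OF c] by auto
    finally show ?thesis .
  qed
  define kap where "kap = kappa K e l \<mu>"
  have ratio_bd: "inner c l / inner c \<mu> \<le> norm l / sm" if c: "c \<in> C" for c
  proof -
    have "inner c l / inner c \<mu> \<le> (norm c * norm l) / (sm * norm c)"
      by (rule frac_le) (use sm CK[OF c] cne0[OF c] norm_cauchy_schwarz[of c l] lc[OF c] lmin in auto)
    then show ?thesis using cne0[OF c] by simp
  qed
  have bddk: "bdd_above ((\<lambda>c. inner c l / inner c \<mu>) ` C)"
    using ratio_bd by (intro bdd_aboveI2) auto
  have ratio_le: "inner c l / inner c \<mu> \<le> kap" if "c \<in> C" for c
    unfolding kap_def kappa_def C_def[symmetric] by (rule cSUP_upper[OF that bddk])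
  have kpos: "kap > 0"
  proof -
    have "0 < inner c0 l / inner c0 \<mu>" using lc[OF c0] lmin mc[OF c0] by simp
    then show ?thesis using ratio_le[OF c0] by simp
  qed
  define q where "q = 1 - 1 / kap"
  have lmq: "inner c l - inner c \<mu> \<le> q * inner c l" if c: "c \<in> C" for c
  proof -
    have "inner c l \<le> kap * inner c \<mu>" using ratio_le[OF c] mc[OF c] by (simp add: pos_divide_le_eq)
    then have "inner c l / kap \<le> inner c \<mu>" using kpos by (simp add: divide_le_eq mult.commute)
    then show ?thesis by (simp add: q_def algebra_simps)
  qed
  have lin: "linear (JF z)" for z using has_derivative_linear[OF deriv] .
  define psi where "psi xk c y = inner c (JF xk (y - xk) + ((1/2) * (norm (y - xk))\<^sup>2) *\<^sub>R l)" for xk c y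
  have obj: "subproblem_obj K e JF l xk y = (SUP c\<in>C. psi xk c y)" for xk y
    by (simp add: subproblem_obj_def psi_def C_def)
  have bddpsi: "bdd_above ((\<lambda>c. psi xk c y) ` C)" for xk y
  proof (rule bdd_aboveI2)
    fix c assume c: "c \<in> C"
    let ?w = "JF xk (y - xk) + ((1/2) * (norm (y - xk))\<^sup>2) *\<^sub>R l"
    have "psi xk c y \<le> norm c * norm ?w" unfolding psi_def by (rule norm_cauchy_schwarz)
    also have "\<dots> \<le> (1/se) * norm ?w" using cnorm[OF c] by (intro mult_right_mono) auto
    finally show "psi xk c y \<le> (1/se) * norm ?w" .
  qed
  have psi_le: "psi xk c y \<le> subproblem_obj K e JF l xk y" if "c \<in> C" for xk c y
    unfolding obj by (rule cSUP_upper[OF that bddpsi])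
  have psi_self: "psi xk c xk = 0" for xk c
    using linear_0[OF lin] by (simp add: psi_def)
  have psi_split: "psi xk c y = inner c (JF xk (y - xk)) + (1/2) * (norm (y - xk))\<^sup>2 * inner c l" for xk c y
    by (simp add: psi_def inner_add_right)
  have smooth_c: "inner c (F y) - inner c (F xk) \<le> psi xk c y" if c: "c \<in> C" for xk y c
    using le[OF smooth[unfolded K_smooth_def, rule_format, of y xk] c]
    by (simp add: psi_def inner_diff_right)
  have sconv_c: "inner c (JF xk (y - xk)) + (1/2) * (norm (y - xk))\<^sup>2 * inner c \<mu> \<le> inner c (F y) - inner c (F xk)"
    if c: "c \<in> C" for xk y c
    using le[OF sconv[unfolded strongly_K_convex_def, rule_format, of xk y] c]
    by (simp add: inner_diff_right inner_add_right)
  have argmin: "subproblem_obj K e JF l (x k) (x (Suc k)) \<le> subproblem_obj K e JF l (x k) y" for k y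
    using step[of k] by (simp add: is_arg_min_def not_less)
  have key: "(norm (z - x (Suc k)))\<^sup>2 \<le> q * (norm (z - x k))\<^sup>2"
    if zL: "\<forall>c\<in>C. inner c (F z) \<le> inner c (F (x (Suc k)))" for k z
  proof (rule ccontr)
    define xk where "xk = x k"
    define xn where "xn = x (Suc k)"
    define ph where "ph = subproblem_obj K e JF l xk xn"
    define N where "N = (norm (z - xn))\<^sup>2"
    define D where "D = (norm (z - xk))\<^sup>2"
    define a where "a = N - q * D"
    assume "\<not> (norm (z - x (Suc k)))\<^sup>2 \<le> q * (norm (z - x k))\<^sup>2"
    then have apos: "a > 0" by (simp add: a_def N_def D_def xn_def xk_def)
    have Dnn: "D \<ge> 0" "N \<ge> 0" by (auto simp: D_def N_def)
    have A: "psi xk c xn \<le> ph" if c: "c \<in> C" for c unfolding ph_def by (rule psi_le[OF c])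
    have B: "psi xk c z \<le> ph + (1/2) * q * inner c l * D" if c: "c \<in> C" for c
    proof -
      have "inner c (JF xk (z - xk)) + (1/2) * D * inner c \<mu> \<le> inner c (F z) - inner c (F xk)"
        using sconv_c[OF c, of xk z] by (simp add: D_def)
      also have "\<dots> \<le> inner c (F xn) - inner c (F xk)" using zL c by (simp add: xn_def)
      also have "\<dots> \<le> ph" using smooth_c[OF c, of xn xk] A[OF c] by simp
      finally have 1: "inner c (JF xk (z - xk)) + (1/2) * D * inner c \<mu> \<le> ph" .
      have 2: "psi xk c z = inner c (JF xk (z - xk)) + (1/2) * D * inner c l"
        by (simp add: psi_split D_def)
      have "(1/2) * D * (inner c l - inner c \<mu>) \<le> (1/2) * D * (q * inner c l)"
        using lmq[OF c] Dnn by (intro mult_left_mono) auto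
      then show ?thesis using 1 2 by (simp add: algebra_simps)
    qed
    define t where "t = min 1 (a / (2*(N+1)))"
    have t: "0 < t" "t \<le> 1" using apos Dnn by (auto simp: t_def)
    have tN: "t * N \<le> a/2"
    proof -
      have "t * N \<le> (a / (2*(N+1))) * N" using Dnn by (intro mult_right_mono) (auto simp: t_def)
      also have "\<dots> = (a/2) * (N / (N+1))" using Dnn by (simp add: field_simps)
      also have "\<dots> \<le> (a/2) * 1" using apos Dnn by (intro mult_left_mono) auto
      finally show ?thesis by simp
    qed
    define w where "w = xn + t *\<^sub>R (z - xn)"
    have wx: "w - xk = (1-t) *\<^sub>R (xn - xk) + t *\<^sub>R (z - xk)" by (simp add: w_def algebra_simps)
    have vu: "(z - xk) - (xn - xk) = z - xn" by simp
    have W: "psi xk c w \<le> ph - (1/4) * t * lmin * a" if c: "c \<in> C" for c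
    proof -
      have "psi xk c w = (1-t) * psi xk c xn + t * psi xk c z - (1/2) * inner c l * (t * (1-t) * N)"
        unfolding psi_def wx quad_interp[OF lin] vu N_def by simp
      also have "\<dots> \<le> (1-t) * ph + t * (ph + (1/2) * q * inner c l * D) - (1/2) * inner c l * (t * (1-t) * N)"
        using A[OF c] B[OF c] t by (intro diff_right_mono add_mono mult_left_mono) auto
      also have "\<dots> = ph + (1/2) * (t * inner c l) * (q * D - (1-t) * N)" by (simp add: algebra_simps) (simp add: field_simps)
      also have "\<dots> \<le> ph + (1/2) * (t * inner c l) * (- a / 2)"
      proof -
        have "q * D - (1-t) * N \<le> - a / 2" using tN by (simp add: a_def algebra_simps)
        moreover have "t * inner c l \<ge> 0" using t lc[OF c] lmin by simp
        ultimately have "(t * inner c l) * (q * D - (1-t) * N) \<le> (t * inner c l) * (- a / 2)"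
          by (intro mult_left_mono) auto
        then show ?thesis by (simp add: mult.commute mult.left_commute)
      qed
      also have "\<dots> \<le> ph - (1/4) * t * lmin * a"
      proof -
        have "t * a * lmin \<le> t * a * inner c l" using lc[OF c] t apos by (intro mult_left_mono) auto
        then show ?thesis by (simp add: algebra_simps)
      qed
      finally show ?thesis .
    qed
    have "subproblem_obj K e JF l xk w \<le> ph - (1/4) * t * lmin * a"
      unfolding obj by (rule cSUP_least[OF Cne W])
    moreover have "ph \<le> subproblem_obj K e JF l xk w" unfolding ph_def xk_def xn_def by (rule argmin)
    moreover have "t * lmin * a > 0" using t lmin apos by simp
    ultimately show False by linarith
  qed
  have qnn: "q \<ge> 0"
  proof -
    have "0 \<le> q * (norm (x (Suc 0) - x 0))\<^sup>2" using key[of "x (Suc 0)" 0] by simp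
    moreover have "(norm (x (Suc 0) - x 0))\<^sup>2 > 0" using nonterm[of 0] by simp
    ultimately show ?thesis by (simp add: zero_le_mult_iff)
  qed
  have q1: "q < 1" using kpos by (simp add: q_def)
  define \<rho> where "\<rho> = sqrt q"
  have rho: "0 \<le> \<rho>" "\<rho> < 1" using qnn q1 by (auto simp: \<rho>_def)
  have rate: "norm (x (Suc k) - z) \<le> \<rho> * norm (x k - z)"
    if zL: "\<forall>c\<in>C. inner c (F z) \<le> inner c (F (x (Suc k)))" for k z
  proof -
    have "sqrt ((norm (z - x (Suc k)))\<^sup>2) \<le> sqrt (q * (norm (z - x k))\<^sup>2)"
      using key[OF zL] by (rule real_sqrt_le_mono)
    then show ?thesis by (simp add: \<rho>_def real_sqrt_mult norm_minus_commute)
  qed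
  have obj_self: "subproblem_obj K e JF l xk xk \<le> 0" for xk
    unfolding obj using Cne by (rule cSUP_least) (simp add: psi_self)
  have dec: "inner c (F (x (Suc k))) \<le> inner c (F (x k))" if c: "c \<in> C" for c k
  proof -
    have "inner c (F (x (Suc k))) - inner c (F (x k)) \<le> psi (x k) c (x (Suc k))"
      by (rule smooth_c[OF c])
    also have "\<dots> \<le> subproblem_obj K e JF l (x k) (x (Suc k))" by (rule psi_le[OF c])
    also have "\<dots> \<le> subproblem_obj K e JF l (x k) (x k)" by (rule argmin)
    also have "\<dots> \<le> 0" by (rule obj_self)
    finally show ?thesis by simp
  qed
  have mono: "inner c (F (x j)) \<le> inner c (F (x k))" if "k \<le> j" "c \<in> C" for c j k
    using that(1)
  proof (induction j rule: dec_induct)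
    case base then show ?case by simp
  next
    case (step j) then show ?case using dec[OF that(2), of j] by linarith
  qed
  define L where "L = {z. \<forall>k. \<forall>c\<in>C. inner c (F z) \<le> inner c (F (x k))}"
  have conv: "x \<longlonglongrightarrow> z" if zL: "z \<in> L" for z
  proof -
    have b: "norm (x k - z) \<le> \<rho>^k * norm (x 0 - z)" for k
    proof (induction k)
      case 0 then show ?case by simp
    next
      case (Suc k)
      have "norm (x (Suc k) - z) \<le> \<rho> * norm (x k - z)" using zL by (intro rate) (auto simp: L_def)
      also have "\<dots> \<le> \<rho> * (\<rho>^k * norm (x 0 - z))" using Suc rho by (intro mult_left_mono) auto
      finally show ?case by simp
    qed
    have g: "(\<lambda>k. \<rho>^k * norm (x 0 - z)) \<longlonglongrightarrow> 0"
      using tendsto_mult[OF LIMSEQ_power_zero[of \<rho>] tendsto_const[of "norm (x 0 - z)"]] rho by simp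
    have "(\<lambda>k. x k - z) \<longlonglongrightarrow> 0"
      by (rule Lim_null_comparison[OF _ g]) (use b in auto)
    then show ?thesis by (rule LIM_zero_cancel)
  qed
  have bnd: "bounded (range x)"
  proof -
    obtain B where B: "B > 0" "\<And>v. norm (JF (x 0) v) \<le> norm v * B"
      using bounded_linear.pos_bounded[OF has_derivative_bounded_linear[OF deriv[of "x 0"]]] by blast
    define R where "R = 2 * norm c0 * B / inner c0 \<mu>"
    have m0: "inner c0 \<mu> > 0" by (rule mc[OF c0])
    have "norm (x k - x 0) \<le> R" for k
    proof -
      define d where "d = x k - x 0"
      have "inner c0 (JF (x 0) d) + (1/2) * (norm d)\<^sup>2 * inner c0 \<mu> \<le> 0"
        using sconv_c[OF c0, of "x 0" "x k"] mono[of 0 k c0] c0 by (simp add: d_def)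
      moreover have "- inner c0 (JF (x 0) d) \<le> norm c0 * (norm d * B)"
      proof -
        have "- inner c0 (JF (x 0) d) = inner (- c0) (JF (x 0) d)" by simp
        also have "\<dots> \<le> norm (-c0) * norm (JF (x 0) d)" by (rule norm_cauchy_schwarz)
        also have "\<dots> \<le> norm c0 * (norm d * B)" using B by (simp add: mult_left_mono)
        finally show ?thesis .
      qed
      ultimately have 1: "(1/2) * (norm d)\<^sup>2 * inner c0 \<mu> \<le> norm c0 * B * norm d"
        by (simp add: algebra_simps)
      show ?thesis
      proof (cases "norm d = 0")
        case True then show ?thesis using B m0 by (simp add: d_def R_def)
      next
        case False
        then have nd: "norm d > 0" by simp
        have "norm d * ((1/2) * norm d * inner c0 \<mu>) \<le> norm d * (norm c0 * B)"
          using 1 by (simp add: power2_eq_square algebra_simps)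
        then have "(1/2) * norm d * inner c0 \<mu> \<le> norm c0 * B" using nd by simp
        then show ?thesis using m0 by (simp add: d_def R_def field_simps)
      qed
    qed
    then have "norm (x k) \<le> norm (x 0) + R" for k
      using norm_triangle_ineq[of "x k - x 0" "x 0"] by (smt (verit) diff_add_cancel)
    then show ?thesis by (auto simp: bounded_iff)
  qed
  obtain xb r where r: "strict_mono r" "(x \<circ> r) \<longlonglongrightarrow> xb"
    using bounded_imp_convergent_subsequence[OF bnd] by blast
  have xbL: "xb \<in> L"
  proof -
    have "inner c (F xb) \<le> inner c (F (x k))" if c: "c \<in> C" for k c
    proof -
      have "isCont F xb" using has_derivative_continuous[OF deriv] .
      then have "(\<lambda>j. F ((x \<circ> r) j)) \<longlonglongrightarrow> F xb" using r(2) by (rule isCont_tendsto_compose)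
      then have lim: "(\<lambda>j. inner c (F ((x \<circ> r) j))) \<longlonglongrightarrow> inner c (F xb)"
        by (intro tendsto_inner tendsto_const)
      show ?thesis
      proof (rule LIMSEQ_le_const2[OF lim], intro exI allI impI)
        fix j assume "k \<le> j"
        then have "k \<le> r j" using seq_suble[OF r(1), of j] by simp
        then show "inner c (F ((x \<circ> r) j)) \<le> inner c (F (x k))" using mono c by simp
      qed
    qed
    then show ?thesis by (auto simp: L_def)
  qed
  have eff: "efficient K F xb"
    unfolding efficient_def
  proof
    assume "\<exists>y. cone_le K (F y) (F xb) \<and> F y \<noteq> F xb"
    then obtain y where y: "cone_le K (F y) (F xb)" "F y \<noteq> F xb" by blast
    have "y \<in> L" using xbL le[OF y(1)] by (force simp: L_def intro: order_trans)
    then have "y = xb" using LIMSEQ_unique[OF conv conv[OF xbL]] by blast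
    then show False using y(2) by simp
  qed
  show ?thesis
  proof (intro exI conjI allI)
    show "efficient K F xb" by (rule eff)
    show "x \<longlonglongrightarrow> xb" by (rule conv[OF xbL])
    fix k
    show "norm (x (Suc k) - xb) \<le> sqrt (1 - 1 / kappa K e l \<mu>) * norm (x k - xb)"
      using rate[of xb k] xbL by (auto simp: L_def \<rho>_def q_def kap_def)
  qed
qed
end
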